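(* Both $\mathcal{P}$ and $\overline{\mathcal{P}}$ are $(1,1,2)$-quasi-balanced, i.e. if $(a,s,p)$ belongs to the set and $z\in\Delta$ then $(za,zs,z^2p)$ belongs to the set; both are starlike about $(0,0,0)$, i.e. if $x$ belongs to the set and $0\le r\le 1$ then $rx$ belongs to the set. Neither $\mathcal{P}$ nor $\overline{\mathcal{P}}$ is circled, i.e. for each of them there exist a point $x$ of the set and $\omega\in\mathbb{T}$ with $\omega x$ not in the set.
   Context: $\Delta$ is the closed unit disc and $\mathbb{T}$ the unit circle. $\mathbb{B}$ is the open unit ball of $\mathbb{C}^{2\times 2}$ (operator norm), $\pi(A)=(a_{21},\operatorname{tr}A,\det A)$, $\mathcal{P}=\pi(\mathbb{B})$, $\overline{\mathcal{P}}$ its closure. *)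

theory Defs
  imports "HOL-Analysis.Analysis"
begin

definition matball :: "(complex^2^2) set" where
  "matball = {A. onorm (\<lambda>v. A *v v) < 1}"

definition piP :: "complex^2^2 \<Rightarrow> complex \<times> complex \<times> complex" where
  "piP A = (A $ 2 $ 1, trace A, det A)"

definition pentablock :: "(complex \<times> complex \<times> complex) set" where
  "pentablock = piP ` matball"

definition quasi_balanced112 :: "(complex \<times> complex \<times> complex) set \<Rightarrow> bool" where
  "quasi_balanced112 S \<longleftrightarrow>
     (\<forall>a s p z. (a, s, p) \<in> S \<and> cmod z \<le> 1 \<longrightarrow> (z * a, z * s, z^2 * p) \<in> S)"

definition starlike0 :: "(complex \<times> complex \<times> complex) set \<Rightarrow> bool" where
  "starlike0 S \<longleftrightarrow>
     (\<forall>a s p r. (a, s, p) \<in> S \<and> 0 \<le> r \<and> r \<le> (1::real) \<longrightarrow>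
        (of_real r * a, of_real r * s, of_real r * p) \<in> S)"

definition circled :: "(complex \<times> complex \<times> complex) set \<Rightarrow> bool" where
  "circled S \<longleftrightarrow>
     (\<forall>a s p w. (a, s, p) \<in> S \<and> cmod w = 1 \<longrightarrow> (w * a, w * s, w * p) \<in> S)"

end

theory Submission
  imports Defs
begin


lemma cmod_sq_c: "complex_of_real (cmod z ^ 2) = z * cnj z"
  by (metis complex_norm_square of_real_power)

lemma re2: "complex_of_real (2 * Re w) = w + cnj w"
  by (simp add: complex_add_cnj)

lemma quad_expand:
  fixes a b c d x y :: complex
  shows "cmod(a*x+b*y)^2 + cmod(c*x+d*y)^2 =
    (cmod a^2 + cmod c^2) * cmod x^2 + (cmod b^2 + cmod d^2) * cmod y^2
    + 2 * Re (cnj x * (cnj a * b + cnj c * d) * y)"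
  unfolding cmod_power2 by (simp add: algebra_simps power2_eq_square)

lemma det_ident:
  fixes a b c d :: complex
  shows "(cmod a^2 + cmod c^2) * (cmod b^2 + cmod d^2) - cmod (cnj a * b + cnj c * d)^2
     = cmod (a*d - b*c)^2"
  unfolding cmod_power2 by (simp add: algebra_simps power2_eq_square)

lemma psd_real:
  fixes al be g X Y :: real
  assumes "0 \<le> al" "0 \<le> be" "g^2 \<le> al*be" "0 \<le> X" "0 \<le> Y" "0 \<le> g"
  shows "2*g*X*Y \<le> al*X^2 + be*Y^2"
proof (cases "al = 0")
  case True
  then have "g^2 \<le> 0" using assms by simp
  then have "g = 0" by simp
  then show ?thesis using assms by simp
next
  case False
  then have "al > 0" using assms by simp
  have "al*(al*X^2 + be*Y^2 - 2*g*X*Y) = (al*X - g*Y)^2 + (al*be - g^2)*Y^2"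
    by (simp add: algebra_simps power2_eq_square)
  also have "\<dots> \<ge> 0" using assms by simp
  finally show ?thesis using \<open>al>0\<close> by (simp add: zero_le_mult_iff)
qed

lemma psd_form:
  fixes x y ga :: complex and al be :: real
  assumes "0 \<le> al" "0 \<le> be" "cmod ga^2 \<le> al*be"
  shows "2 * Re (cnj x * ga * y) \<le> al*cmod x^2 + be*cmod y^2"
proof -
  have "Re (cnj x * ga * y) \<le> cmod (cnj x * ga * y)" by (rule complex_Re_le_cmod)
  also have "\<dots> = cmod ga * cmod x * cmod y" by (simp add: norm_mult)
  finally have "2 * Re (cnj x * ga * y) \<le> 2 * cmod ga * cmod x * cmod y" by simp
  also have "\<dots> \<le> al*cmod x^2 + be*cmod y^2"
    by (rule psd_real) (use assms in auto)
  finally show ?thesis .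
qed

lemma crit_bwd:
  fixes a b c d :: complex
  assumes D: "cmod (a*d-b*c) < 1"
    and F: "cmod a^2 + cmod b^2 + cmod c^2 + cmod d^2 < 1 + cmod (a*d-b*c)^2"
  shows "\<exists>k. 0 \<le> k \<and> k < 1 \<and> (\<forall>x y. cmod(a*x+b*y)^2 + cmod(c*x+d*y)^2 \<le> k^2 * (cmod x^2 + cmod y^2))"
proof -
  define m11 where "m11 = cmod a^2 + cmod c^2"
  define m22 where "m22 = cmod b^2 + cmod d^2"
  define m12 where "m12 = cnj a * b + cnj c * d"
  define g where "g = cmod m12"
  define X where "X = 1 - m11"
  define Y where "Y = 1 - m22"
  have di: "m11 * m22 - g^2 = cmod (a*d-b*c)^2" unfolding m11_def m22_def g_def m12_def by (rule det_ident)
  have D2: "cmod (a*d-b*c)^2 < 1" using D by (simp add: power_less_one_iff)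
  have pos: "X*Y - g^2 > 0" unfolding X_def Y_def using di F unfolding m11_def m22_def by (simp add: algebra_simps)
  have sum: "X + Y > 0" unfolding X_def Y_def m11_def m22_def using F D2 by simp
  have m11p: "m11 \<ge> 0" "m22 \<ge> 0" unfolding m11_def m22_def by auto
  have XYp: "X*Y > 0" using pos by (smt (verit) zero_le_power2)
  have Xp: "X > 0" and Yp: "Y > 0" using XYp sum by (smt (verit) mult_nonpos_nonneg mult_nonneg_nonpos)+
  define e where "e = (X*Y - g^2)/(X+Y)"
  have ep: "e > 0" unfolding e_def using pos sum by simp
  have eX: "e \<le> X" unfolding e_def using sum Xp Yp pos
    by (simp add: divide_le_eq algebra_simps)
  have eY: "e \<le> Y" unfolding e_def using sum Xp Yp pos
    by (simp add: divide_le_eq algebra_simps)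
  have ee: "e * (X+Y) = X*Y - g^2" unfolding e_def using sum by simp
  define al where "al = X - e"
  define be where "be = Y - e"
  have alp: "al \<ge> 0" "be \<ge> 0" unfolding al_def be_def using eX eY by auto
  have gab: "g^2 \<le> al*be"
  proof -
    have "al*be = X*Y - e*(X+Y) + e^2" unfolding al_def be_def by (simp add: algebra_simps power2_eq_square)
    then show ?thesis using ee by (smt (verit) zero_le_power2)
  qed
  define c2 where "c2 = 1 - e"
  have c2p: "0 \<le> c2" "c2 < 1" unfolding c2_def using ep eX m11p unfolding X_def by auto
  show ?thesis
  proof (intro exI conjI allI)
    show "0 \<le> sqrt c2" using c2p by simp
    show "sqrt c2 < 1" using c2p by simp
    fix x y :: complex
    have "2 * Re (cnj x * m12 * y) \<le> al*cmod x^2 + be*cmod y^2"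
      by (rule psd_form) (use alp gab g_def in auto)
    then have "cmod(a*x+b*y)^2 + cmod(c*x+d*y)^2 \<le> m11 * cmod x^2 + m22 * cmod y^2 + al*cmod x^2 + be*cmod y^2"
      unfolding quad_expand m11_def m22_def m12_def by simp
    also have "\<dots> = c2 * (cmod x^2 + cmod y^2)" unfolding al_def be_def c2_def X_def Y_def by (simp add: algebra_simps)
    finally show "cmod(a*x+b*y)^2 + cmod(c*x+d*y)^2 \<le> (sqrt c2)^2 * (cmod x^2 + cmod y^2)" using c2p by simp
  qed
qed

lemma crit_fwd:
  fixes a b c d :: complex
  assumes k: "0 \<le> k" "k < 1"
    and N: "\<And>x y. cmod(a*x+b*y)^2 + cmod(c*x+d*y)^2 \<le> k^2 * (cmod x^2 + cmod y^2)"
  shows "cmod (a*d-b*c) < 1 \<and> cmod a^2 + cmod b^2 + cmod c^2 + cmod d^2 < 1 + cmod (a*d-b*c)^2"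
proof -
  define m11 where "m11 = cmod a^2 + cmod c^2"
  define m22 where "m22 = cmod b^2 + cmod d^2"
  define m12 where "m12 = cnj a * b + cnj c * d"
  define g where "g = cmod m12"
  define c2 where "c2 = k^2"
  have c2p: "0 \<le> c2" "c2 < 1" unfolding c2_def using k by (auto simp: power_less_one_iff)
  define al where "al = c2 - m11"
  define be where "be = c2 - m22"
  have di: "m11 * m22 - g^2 = cmod (a*d-b*c)^2" unfolding m11_def m22_def g_def m12_def by (rule det_ident)
  have Q: "2 * Re (cnj x * m12 * y) \<le> al*cmod x^2 + be*cmod y^2" for x y
    using N[of x y] unfolding quad_expand al_def be_def c2_def m11_def m22_def m12_def
    by (simp add: algebra_simps)
  have alp: "al \<ge> 0" using Q[of 1 0] by simp
  have bep: "be \<ge> 0" using Q[of 0 1] by simp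
  have gm: "m12 * cnj m12 = of_real (g^2)" unfolding g_def by (metis complex_norm_square of_real_power)
  have Qt: "2 * t * g^2 \<le> al * t^2 + be * g^2" for t :: real
  proof -
    have "cnj (of_real t) * m12 * cnj m12 = of_real (t * g^2)" using gm by (simp add: mult.assoc)
    then have "Re (cnj (of_real t) * m12 * cnj m12) = t * g^2" by (metis Re_complex_of_real)
    then show ?thesis using Q[of "of_real t" "cnj m12"] unfolding g_def by (simp add: power2_eq_square)
  qed
  have gab: "g^2 \<le> al*be"
  proof (cases "be = 0")
    case False
    then have "be > 0" using bep by simp
    have "2 * be * g^2 \<le> al * be^2 + be * g^2" using Qt[of be] .
    then have "be * g^2 \<le> be * (al*be)" by (simp add: algebra_simps power2_eq_square)
    then show ?thesis using \<open>be > 0\<close> by simp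
  next
    case True
    show ?thesis
    proof (rule ccontr)
      assume "\<not> ?thesis"
      then have gp: "g^2 > 0" using True by simp
      define t where "t = g^2 / (al + 1)"
      have tp: "t > 0" unfolding t_def using gp alp by simp
      have "2 * t * g^2 \<le> al * t^2" using Qt[of t] True by simp
      then have "2 * g^2 \<le> al * t" using tp by (simp add: power2_eq_square)
      also have "al * t < g^2" unfolding t_def using gp alp by (simp add: field_simps)
      finally show False using gp by simp
    qed
  qed
  have m11p: "m11 \<ge> 0" "m22 \<ge> 0" unfolding m11_def m22_def by auto
  have X: "1 - m11 > al" "1 - m22 > be" unfolding al_def be_def using c2p by auto
  have "al * be < (1 - m11) * (1 - m22)"
  proof -
    have "al * be \<le> al * (1 - m22)" using X alp by (intro mult_left_mono) auto
    also have "\<dots> < (1 - m11) * (1 - m22)" using X bep by (intro mult_strict_right_mono) auto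
    finally show ?thesis .
  qed
  then have F: "cmod a^2 + cmod b^2 + cmod c^2 + cmod d^2 < 1 + cmod (a*d-b*c)^2"
    using gab di unfolding m11_def m22_def by (simp add: algebra_simps)
  have "cmod (a*d-b*c)^2 \<le> m11 * m22" using di by (smt (verit) zero_le_power2)
  also have "\<dots> \<le> c2 * c2" using alp bep m11p unfolding al_def be_def by (intro mult_mono) auto
  also have "\<dots> \<le> c2 * 1" using c2p by (intro mult_left_mono) auto
  also have "\<dots> < 1" using c2p by simp
  finally have "cmod (a*d-b*c) < 1" by (simp add: power_less_one_iff)
  with F show ?thesis by simp
qed

definition FF :: "complex^2^2 \<Rightarrow> real" where
  "FF A = cmod (A$1$1)^2 + cmod (A$1$2)^2 + cmod (A$2$1)^2 + cmod (A$2$2)^2"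

lemma mv1: "(A *v v)$1 = A$1$1 * v$1 + A$1$2 * v$2" for A :: "complex^2^2"
  by (simp add: matrix_vector_mult_def sum_2)
lemma mv2: "(A *v v)$2 = A$2$1 * v$1 + A$2$2 * v$2" for A :: "complex^2^2"
  by (simp add: matrix_vector_mult_def sum_2)

lemma nsq: "norm (v::complex^2)^2 = cmod (v$1)^2 + cmod (v$2)^2"
  by (simp add: norm_vec_def L2_set_def sum_2)

lemma nAv: "norm (A *v v)^2 = cmod(A$1$1 * v$1 + A$1$2 * v$2)^2 + cmod(A$2$1 * v$1 + A$2$2 * v$2)^2"
  for A :: "complex^2^2"
  by (simp add: nsq mv1 mv2)

lemma crit: "onorm (\<lambda>v. A *v v) < 1 \<longleftrightarrow> cmod (det A) < 1 \<and> FF A < 1 + cmod (det A)^2"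
  for A :: "complex^2^2"
proof
  assume h: "onorm (\<lambda>v. A *v v) < 1"
  define k where "k = onorm (\<lambda>v. A *v v)"
  have k0: "0 \<le> k" unfolding k_def using onorm_pos_le[of "\<lambda>v. A *v v"] by simp
  have kl: "k < 1" using h unfolding k_def .
  have N: "cmod(A$1$1*x+A$1$2*y)^2 + cmod(A$2$1*x+A$2$2*y)^2 \<le> k^2 * (cmod x^2 + cmod y^2)" for x y
  proof -
    define v :: "complex^2" where "v = (\<chi> i. if i = 1 then x else y)"
    have v1: "v$1 = x" and v2: "v$2 = y" unfolding v_def by auto
    have "norm (A *v v) \<le> k * norm v" unfolding k_def using onorm[of "\<lambda>v. A *v v" v] by simp
    then have "norm (A *v v)^2 \<le> (k * norm v)^2" by (intro power_mono) auto
    moreover have "norm (A *v v)^2 = cmod(A$1$1*x+A$1$2*y)^2 + cmod(A$2$1*x+A$2$2*y)^2"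
      unfolding nsq mv1 mv2 v1 v2 ..
    moreover have "(k * norm v)^2 = k^2 * (cmod x^2 + cmod y^2)"
      unfolding power_mult_distrib nsq v1 v2 ..
    ultimately show ?thesis by linarith
  qed
  have "cmod (A$1$1*A$2$2-A$1$2*A$2$1) < 1 \<and> cmod (A$1$1)^2 + cmod (A$1$2)^2 + cmod (A$2$1)^2 + cmod (A$2$2)^2 < 1 + cmod (A$1$1*A$2$2-A$1$2*A$2$1)^2"
    using crit_fwd[OF k0 kl N] .
  then show "cmod (det A) < 1 \<and> FF A < 1 + cmod (det A)^2" unfolding det_2 FF_def .
next
  assume h: "cmod (det A) < 1 \<and> FF A < 1 + cmod (det A)^2"
  obtain k where k: "0 \<le> k" "k < 1" and
    N: "\<forall>x y. cmod(A$1$1*x+A$1$2*y)^2 + cmod(A$2$1*x+A$2$2*y)^2 \<le> k^2 * (cmod x^2 + cmod y^2)"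
  proof -
    have h1: "cmod (A$1$1*A$2$2-A$1$2*A$2$1) < 1" using h unfolding det_2 by simp
    have h2: "cmod (A$1$1)^2 + cmod (A$1$2)^2 + cmod (A$2$1)^2 + cmod (A$2$2)^2 < 1 + cmod (A$1$1*A$2$2-A$1$2*A$2$1)^2"
      using h unfolding det_2 FF_def by simp
    show ?thesis using crit_bwd[OF h1 h2] that by blast
  qed
  have "norm (A *v v) \<le> k * norm v" for v
  proof -
    have "norm (A *v v)^2 = cmod(A$1$1* v$1+A$1$2* v$2)^2 + cmod(A$2$1* v$1+A$2$2* v$2)^2"
      by (simp only: nsq mv1 mv2)
    also have "\<dots> \<le> k^2 * (cmod (v$1)^2 + cmod (v$2)^2)" using N by blast
    also have "\<dots> = (k * norm v)^2" by (simp only: power_mult_distrib nsq)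
    finally have "norm (A *v v)^2 \<le> (k * norm v)^2" .
    then show ?thesis using k by (metis power2_le_imp_le mult_nonneg_nonneg norm_ge_zero)
  qed
  then have "onorm (\<lambda>v. A *v v) \<le> k" by (rule onorm_le)
  then show "onorm (\<lambda>v. A *v v) < 1" using k by simp
qed

definition Pc :: "complex \<Rightarrow> complex \<Rightarrow> complex \<Rightarrow> complex \<Rightarrow> bool" where
  "Pc a b c d \<longleftrightarrow> cmod (a*d-b*c) < 1 \<and> cmod a^2 + cmod b^2 + cmod c^2 + cmod d^2 < 1 + cmod (a*d-b*c)^2"

definition mk :: "complex \<Rightarrow> complex \<Rightarrow> complex \<Rightarrow> complex \<Rightarrow> complex^2^2" where
  "mk a b c d = (\<chi> i j. if i = 1 then (if j = 1 then a else b) else (if j = 1 then c else d))"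

lemma mk_simps: "mk a b c d $ 1 $ 1 = a" "mk a b c d $ 1 $ 2 = b" "mk a b c d $ 2 $ 1 = c" "mk a b c d $ 2 $ 2 = d"
  by (simp_all add: mk_def)

lemma trace2: "trace (A::complex^2^2) = A$1$1 + A$2$2"
  by (simp add: trace_def sum_2)

lemma mem_P: "x \<in> pentablock \<longleftrightarrow> (\<exists>a b c d. Pc a b c d \<and> x = (c, a+d, a*d-b*c))"
proof
  assume "x \<in> pentablock"
  then obtain A where A: "A \<in> matball" and x: "x = piP A" unfolding pentablock_def by auto
  have "Pc (A$1$1) (A$1$2) (A$2$1) (A$2$2)" using A unfolding matball_def Pc_def
    using crit[of A] by (simp add: det_2 FF_def)
  moreover have "x = (A$2$1, A$1$1 + A$2$2, A$1$1*A$2$2 - A$1$2*A$2$1)"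
    unfolding x piP_def trace2 det_2 ..
  ultimately show "\<exists>a b c d. Pc a b c d \<and> x = (c, a+d, a*d-b*c)" by blast
next
  assume "\<exists>a b c d. Pc a b c d \<and> x = (c, a+d, a*d-b*c)"
  then obtain a b c d where P: "Pc a b c d" and x: "x = (c, a+d, a*d-b*c)" by blast
  have "mk a b c d \<in> matball" unfolding matball_def using crit[of "mk a b c d"] P
    by (simp add: det_2 FF_def mk_simps Pc_def)
  moreover have "piP (mk a b c d) = x" unfolding x piP_def trace2 det_2 mk_simps ..
  ultimately show "x \<in> pentablock" unfolding pentablock_def by blast
qed




lemma qb_Pc:
  assumes P: "Pc a b c d" and z: "cmod z \<le> 1"
  shows "Pc (z*a) (z*b) (z*c) (z*d)"
proof -
  define t where "t = cmod z ^ 2"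
  define D where "D = cmod (a*d-b*c)"
  define F where "F = cmod a^2 + cmod b^2 + cmod c^2 + cmod d^2"
  have t: "0 \<le> t" "t \<le> 1" unfolding t_def using z by (auto simp: power_le_one)
  have D: "0 \<le> D" "D < 1" "F < 1 + D^2" using P unfolding Pc_def D_def F_def by auto
  have e1: "z*a*(z*d) - z*b*(z*c) = z^2 * (a*d-b*c)" by (simp add: algebra_simps power2_eq_square)
  have e2: "cmod (z*a)^2 + cmod (z*b)^2 + cmod (z*c)^2 + cmod (z*d)^2 = t * F"
    unfolding t_def F_def by (simp add: norm_mult power_mult_distrib algebra_simps)
  have e3: "cmod (z^2 * (a*d-b*c)) = t * D" unfolding t_def D_def by (simp add: norm_mult norm_power)
  have "t * D < 1"
  proof -
    have "t * D \<le> 1 * D" using t D by (intro mult_right_mono) auto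
    then show ?thesis using D by simp
  qed
  moreover have "t * F < 1 + (t*D)^2"
  proof (cases "t = 0")
    case True then show ?thesis by simp
  next
    case False
    then have "t * F < t * (1 + D^2)" using t D by simp
    also have "\<dots> \<le> 1 + (t*D)^2"
    proof -
      have "0 \<le> (1 - t) * (1 - t*D^2)"
      proof (rule mult_nonneg_nonneg)
        have "t * D^2 \<le> 1 * 1" using t D by (intro mult_mono) (auto simp: power_le_one)
        then show "0 \<le> 1 - t*D^2" by simp
      qed (use t in simp)
      then show ?thesis by (simp add: algebra_simps power2_eq_square)
    qed
    finally show ?thesis .
  qed
  ultimately show ?thesis unfolding Pc_def e1 e2 e3 by simp
qed

lemma parallelogram_c: "cmod (u+w)^2 + cmod (u-w)^2 = 2*cmod u^2 + 2*cmod w^2"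
  unfolding cmod_power2 by (simp add: algebra_simps power2_eq_square)

lemma inv_Pc:
  assumes P: "Pc a b c d"
  shows "cmod ((a+d)^2 - 2*(a*d-b*c)) < 1 + cmod (a*d-b*c)^2"
proof -
  have "(a+d)^2 - 2*(a*d-b*c) = a^2 + d^2 + 2*(b*c)" by (simp add: algebra_simps power2_eq_square)
  then have "cmod ((a+d)^2 - 2*(a*d-b*c)) \<le> cmod a^2 + cmod d^2 + 2*(cmod b * cmod c)"
    by (metis norm_triangle_le norm_mult norm_power norm_mult_numeral1 norm_triangle_ineq add_mono order_refl)
  also have "2*(cmod b * cmod c) \<le> cmod b^2 + cmod c^2"
    using sum_squares_bound[of "cmod b" "cmod c"] by simp
  then have "cmod a^2 + cmod d^2 + 2*(cmod b * cmod c) \<le> cmod a^2 + cmod b^2 + cmod c^2 + cmod d^2" by simp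
  finally show ?thesis using P unfolding Pc_def by simp
qed




lemma star_Pc:
  assumes P: "Pc a b c d" and r: "0 \<le> r" "r \<le> (1::real)"
  shows "\<exists>a1 b1 c1 d1. Pc a1 b1 c1 d1 \<and> c1 = of_real r * c \<and> a1 + d1 = of_real r * (a + d)
          \<and> a1*d1 - b1*c1 = of_real r * (a*d-b*c)"
proof -
  define R where "R = complex_of_real r"
  define s where "s = a + d"
  define dl where "dl = (a - d)/2"
  define p where "p = a*d - b*c"
  define e where "e = csqrt (R^2 * dl^2 - R*(1-R)*p)"
  have e2: "e^2 = R^2 * dl^2 - R*(1-R)*p" unfolding e_def by simp
  define a1 where "a1 = R * s/2 + e"
  define d1 where "d1 = R * s/2 - e"
  define b1 where "b1 = R*b"
  define c1 where "c1 = R*c"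
  have sum: "a1 + d1 = R * (a+d)" unfolding a1_def d1_def s_def by (simp add: algebra_simps)
  have det: "a1*d1 - b1*c1 = R * p"
  proof -
    have "a1*d1 - b1*c1 = R^2 * s^2/4 - e^2 - R^2*(b*c)" unfolding a1_def d1_def b1_def c1_def
      by (simp add: algebra_simps power2_eq_square)
    also have "\<dots> = R*p" unfolding e2 s_def dl_def p_def by (simp add: field_simps power2_eq_square)
    finally show ?thesis .
  qed
  have cR: "cmod R = r" unfolding R_def using r by simp
  define F where "F = cmod a^2 + cmod b^2 + cmod c^2 + cmod d^2"
  have PF: "cmod p < 1" "F < 1 + cmod p^2" using P unfolding Pc_def F_def p_def by auto
  have Fs: "F = 2*cmod (s/2)^2 + 2*cmod dl^2 + cmod b^2 + cmod c^2"
  proof -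
    have "cmod a^2 + cmod d^2 = 2*cmod (s/2)^2 + 2*cmod dl^2"
    proof -
      have h1: "s/2 + dl = a" "s/2 - dl = d" unfolding s_def dl_def by (simp_all add: field_simps)
      show ?thesis using parallelogram_c[of "s/2" dl] unfolding h1 .
    qed
    then show ?thesis unfolding F_def by simp
  qed
  have ebound: "cmod e^2 \<le> r^2 * cmod dl^2 + r*(1-r)*cmod p"
  proof -
    have "cmod e^2 = cmod (e^2)" by (simp add: norm_power)
    also have "\<dots> \<le> cmod (R^2 * dl^2) + cmod (R*(1-R)*p)" unfolding e2 by (rule norm_triangle_ineq4)
    also have "cmod (R^2 * dl^2) = r^2 * cmod dl^2" using cR by (simp add: norm_mult norm_power)
    also have "cmod (R*(1-R)*p) = r*(1-r)*cmod p"
    proof -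
      have "1 - R = complex_of_real (1-r)" unfolding R_def by simp
      then have "cmod (1 - R) = \<bar>1 - r\<bar>" by (simp only: norm_of_real)
      then have "cmod (1 - R) = 1 - r" using r by simp
      then show ?thesis using cR by (simp add: norm_mult)
    qed
    finally show ?thesis .
  qed
  have F': "cmod a1^2 + cmod b1^2 + cmod c1^2 + cmod d1^2 \<le> r^2 * F + 2*r*(1-r)*cmod p"
  proof -
    have "cmod a1^2 + cmod d1^2 = 2*cmod (R * s/2)^2 + 2*cmod e^2"
      unfolding a1_def d1_def by (rule parallelogram_c)
    also have "cmod (R * s/2) = r * cmod (s/2)" using cR by (simp add: norm_mult norm_divide)
    finally have ad: "cmod a1^2 + cmod d1^2 = 2*(r*cmod (s/2))^2 + 2*cmod e^2" .
    have bc: "cmod b1^2 + cmod c1^2 = r^2 * (cmod b^2 + cmod c^2)" unfolding b1_def c1_def using cR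
      by (simp add: norm_mult power_mult_distrib algebra_simps)
    have eq: "r^2*(2*cmod(s/2)^2 + 2*cmod dl^2 + cmod b^2 + cmod c^2) = 2*(r*cmod(s/2))^2 + 2*(r^2*cmod dl^2) + r^2*(cmod b^2 + cmod c^2)"
      by (simp add: algebra_simps power_mult_distrib power_divide)
    have eq2: "2*r*(1-r)*cmod p = 2*(r*(1-r)*cmod p)" by simp
    show ?thesis unfolding Fs eq eq2 using ad bc ebound by linarith
  qed
  have p0: "0 \<le> cmod p" by simp
  have key: "r^2 * F + 2*r*(1-r)*cmod p < 1 + (r * cmod p)^2"
  proof (cases "r = 0")
    case True then show ?thesis by simp
  next
    case False
    then have rp: "r > 0" using r by simp
    have "r^2 * F < r^2 * (1 + cmod p^2)" using PF rp by simp
    moreover have "r^2 * (1 + cmod p^2) + 2*r*(1-r)*cmod p \<le> 1 + (r * cmod p)^2"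
    proof -
      have "0 \<le> (1 - r) * (1 + r - 2*r*cmod p)"
      proof (rule mult_nonneg_nonneg)
        have "r * cmod p \<le> r * 1" using PF r by (intro mult_left_mono) auto
        then show "0 \<le> 1 + r - 2*r*cmod p" using r by simp
      qed (use r in simp)
      then show ?thesis by (simp add: algebra_simps power2_eq_square)
    qed
    ultimately show ?thesis by simp
  qed
  have "Pc a1 b1 c1 d1"
    unfolding Pc_def det
  proof
    have "cmod (R*p) = r * cmod p" using cR by (simp add: norm_mult)
    moreover have "r * cmod p \<le> 1 * cmod p" using r by (intro mult_right_mono) auto
    ultimately show "cmod (R*p) < 1" using PF by simp
    show "cmod a1^2 + cmod b1^2 + cmod c1^2 + cmod d1^2 < 1 + cmod (R*p)^2"
      using F' key \<open>cmod (R*p) = r * cmod p\<close> by simp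
  qed
  then show ?thesis using sum det unfolding c1_def R_def p_def by blast
qed




lemma closure_inv:
  assumes "continuous_on UNIV f" "f ` S \<subseteq> S"
  shows "f ` closure S \<subseteq> closure S"
  by (rule image_closure_subset) (use assms closure_subset in \<open>auto intro: continuous_on_subset\<close>)

lemma qbP: "quasi_balanced112 pentablock"
  unfolding quasi_balanced112_def
proof (intro allI impI)
  fix a s p z assume h: "(a, s, p) \<in> pentablock \<and> cmod z \<le> 1"
  then obtain a0 b0 c0 d0 where P: "Pc a0 b0 c0 d0" and x: "(a, s, p) = (c0, a0+d0, a0*d0-b0*c0)"
    unfolding mem_P by blast
  have "Pc (z*a0) (z*b0) (z*c0) (z*d0)" using qb_Pc P h by blast
  moreover have "(z * a, z * s, z^2 * p) = (z*c0, z*a0 + z*d0, z*a0*(z*d0) - z*b0*(z*c0))"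
  proof -
    have e: "a = c0" "s = a0+d0" "p = a0*d0-b0*c0" using x by auto
    show ?thesis unfolding e by (simp add: algebra_simps power2_eq_square)
  qed
  ultimately show "(z * a, z * s, z^2 * p) \<in> pentablock" unfolding mem_P by blast
qed

lemma stP: "starlike0 pentablock"
  unfolding starlike0_def
proof (intro allI impI)
  fix a s p and r :: real assume h: "(a, s, p) \<in> pentablock \<and> 0 \<le> r \<and> r \<le> 1"
  then obtain a0 b0 c0 d0 where P: "Pc a0 b0 c0 d0" and x: "(a, s, p) = (c0, a0+d0, a0*d0-b0*c0)"
    unfolding mem_P by blast
  obtain a1 b1 c1 d1 where "Pc a1 b1 c1 d1" "c1 = of_real r * c0" "a1 + d1 = of_real r * (a0 + d0)"
    "a1*d1 - b1*c1 = of_real r * (a0*d0-b0*c0)" using star_Pc[OF P] h by blast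
  moreover have e: "a = c0" "s = a0+d0" "p = a0*d0-b0*c0" using x by auto
  ultimately have "Pc a1 b1 c1 d1 \<and> (of_real r * a, of_real r * s, of_real r * p) = (c1, a1+d1, a1*d1-b1*c1)"
    by simp
  then show "(of_real r * a, of_real r * s, of_real r * p) \<in> pentablock"
    unfolding mem_P by blast
qed

lemma qbC: "quasi_balanced112 (closure pentablock)"
  unfolding quasi_balanced112_def
proof (intro allI impI)
  fix a s p z assume h: "(a, s, p) \<in> closure pentablock \<and> cmod z \<le> 1"
  define f where "f = (\<lambda>x::complex\<times>complex\<times>complex. (z * fst x, z * fst (snd x), z^2 * snd (snd x)))"
  have "continuous_on UNIV f" unfolding f_def by (intro continuous_intros)
  moreover have "f ` pentablock \<subseteq> pentablock" unfolding f_def using qbP h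
    unfolding quasi_balanced112_def by auto
  ultimately have "f ` closure pentablock \<subseteq> closure pentablock" by (rule closure_inv)
  then show "(z * a, z * s, z^2 * p) \<in> closure pentablock" using h unfolding f_def by force
qed

lemma stC: "starlike0 (closure pentablock)"
  unfolding starlike0_def
proof (intro allI impI)
  fix a s p and r :: real assume h: "(a, s, p) \<in> closure pentablock \<and> 0 \<le> r \<and> r \<le> 1"
  define f where "f = (\<lambda>x::complex\<times>complex\<times>complex. (of_real r * fst x, of_real r * fst (snd x), of_real r * snd (snd x)))"
  have "continuous_on UNIV f" unfolding f_def by (intro continuous_intros)
  moreover have "f ` pentablock \<subseteq> pentablock" unfolding f_def using stP h
    unfolding starlike0_def by auto
  ultimately have "f ` closure pentablock \<subseteq> closure pentablock" by (rule closure_inv)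
  then show "(of_real r * a, of_real r * s, of_real r * p) \<in> closure pentablock" using h unfolding f_def by force
qed

lemma inP: "(0, 1, 1/4) \<in> pentablock"
proof -
  have "Pc (1/2) 0 0 (1/2)" unfolding Pc_def by (simp add: power2_eq_square norm_divide)
  moreover have "(0::complex, 1::complex, 1/4::complex) = (0, 1/2 + 1/2, 1/2*(1/2) - 0*0)" by simp
  ultimately show ?thesis unfolding mem_P by blast
qed

lemma notC: "(-1 * 0, -1 * 1, -1 * (1/4)) \<notin> closure pentablock"
proof -
  define T where "T = {x::complex\<times>complex\<times>complex. cmod ((fst (snd x))^2 - 2 * snd (snd x)) \<le> 1 + cmod (snd (snd x))^2}"
  have "closed T" unfolding T_def by (intro closed_Collect_le continuous_intros)
  moreover have "pentablock \<subseteq> T"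
  proof
    fix x assume "x \<in> pentablock"
    then obtain a b c d where P: "Pc a b c d" and x: "x = (c, a+d, a*d-b*c)" unfolding mem_P by blast
    show "x \<in> T" unfolding T_def x using inv_Pc[OF P] by simp
  qed
  ultimately have "closure pentablock \<subseteq> T" by (rule closure_minimal[rotated])
  moreover have "(-1 * 0, -1 * 1, -1 * (1/4)) \<notin> T"
  proof -
    have e: "((-1::complex)*1)^2 - 2 * (-1 * (1/4)) = of_real (3/2)" by simp
    have e2: "(-1::complex) * (1/4) = of_real (-1/4)" by simp
    show ?thesis unfolding T_def by (simp only: e e2 fst_conv snd_conv mem_Collect_eq norm_of_real) (simp add: power2_eq_square)
  qed
  ultimately show ?thesis by blast
qed

lemma notcirc: "\<not> circled pentablock" "\<not> circled (closure pentablock)"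
proof -
  have n: "cmod (-1::complex) = 1" by simp
  show "\<not> circled pentablock" unfolding circled_def using inP notC closure_subset n by blast
  show "\<not> circled (closure pentablock)" unfolding circled_def using inP notC closure_subset n by blast
qed

theorem theorem6p2:
  shows "quasi_balanced112 pentablock \<and> quasi_balanced112 (closure pentablock)
    \<and> starlike0 pentablock \<and> starlike0 (closure pentablock)
    \<and> \<not> circled pentablock \<and> \<not> circled (closure pentablock)"
  using qbP qbC stP stC notcirc by blast


end
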